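(* For $n\geqslant 1$ and $m,d\geqslant 0$, let $\mathfrak{B}_{n,m,d}$ be the set of inversion sequences of length $n$ avoiding the pattern $010$ whose maximum value is $m$ and which contain exactly $d$ distinct values, and let $\mathfrak{b}_{n,m,d}=\#\mathfrak{B}_{n,m,d}$ (so $\#\mathbf{I}_n(010)=\sum_{m=0}^{n-1}\sum_{d=0}^{n}\mathfrak{b}_{n,m,d}$, and $\mathfrak{b}_{n,0,d}=1$ if $d=1$ and $0$ otherwise). Then for all $n\geqslant 1$, $m\geqslant 1$ and $d\geqslant 0$, $$\mathfrak{b}_{n,m,d}=\sum_{i=0}^{d-1}\binom{m-i}{d-i-1}\sum_{p=m+1}^{n}\genfrac{[}{]}{0pt}{}{n-p+1}{n-p-d+i+2}\sum_{j=0}^{m-1}\mathfrak{b}_{p-1,j,i}.$$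
   Context: An inversion sequence of length $n$ is a sequence $\sigma=(\sigma_1,\dots,\sigma_n)$ of nonnegative integers with $0\leqslant\sigma_i<i$ for all $i$; $\mathbf{I}_n(P)$ is the set of those avoiding every pattern in $P$. A sequence $\sigma$ contains a pattern $p=(p_1,\dots,p_k)$ if some subsequence $(\sigma_{i_1},\dots,\sigma_{i_k})$, $i_1<\dots<i_k$, is order-isomorphic to $p$; otherwise it avoids $p$. Avoiding $010$ means there are no $i<j<l$ with $\sigma_i=\sigma_l<\sigma_j$. $\genfrac{[}{]}{0pt}{}{a}{b}$ is the unsigned Stirling number of the first kind (permutations of $a$ elements with $b$ cycles), taken to be $0$ if $b\leqslant 0$ (for $a\geqslant1$) or $b>a$. Binomial coefficients $\binom{a}{b}$ are $0$ when $b<0$ or $b>a$. *)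

theory Defs
  imports "HOL-Combinatorics.Stirling"
begin

text \<open>Inversion sequences of length n as lists (0-indexed): entry at position i is at most i,
  i.e. sigma_(i+1) < i+1.\<close>
definition inv_seq :: "nat \<Rightarrow> nat list \<Rightarrow> bool" where
  "inv_seq n s \<longleftrightarrow> length s = n \<and> (\<forall>i<n. s ! i < Suc i)"

definition avoids_010 :: "nat list \<Rightarrow> bool" where
  "avoids_010 s \<longleftrightarrow> \<not> (\<exists>i j l. i < j \<and> j < l \<and> l < length s \<and> s ! i = s ! l \<and> s ! i < s ! j)"

definition Bset :: "nat \<Rightarrow> nat \<Rightarrow> nat \<Rightarrow> nat list set" where
  "Bset n m d = {s. inv_seq n s \<and> avoids_010 s \<and> Max (set s) = m \<and> card (set s) = d}"

definition bnum :: "nat \<Rightarrow> nat \<Rightarrow> nat \<Rightarrow> nat" where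
  "bnum n m d = card (Bset n m d)"

definition binom_int :: "int \<Rightarrow> int \<Rightarrow> nat" where
  "binom_int a b = (if b < 0 \<or> b > a then 0 else nat a choose nat b)"

definition stirling1_int :: "nat \<Rightarrow> int \<Rightarrow> nat" where
  "stirling1_int a b = (if b \<le> 0 then 0 else stirling a (nat b))"

end

theory Submission
  imports Defs
begin


fun av :: "nat list \<Rightarrow> bool" where
  "av [] = True"
| "av (x#xs) = (av xs \<and> x \<notin> set (dropWhile (\<lambda>y. y \<le> x) xs))"

lemma ex_later:
  fixes xs :: "nat list"
  shows
  "(\<exists>j l. j<l \<and> l<length xs \<and> xs!l = x \<and> x < xs!j) \<longleftrightarrow> x \<in> set (dropWhile (\<lambda>y. y \<le> x) xs)"
proof (induction xs)
  case Nil then show ?case by simp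
next
  case (Cons y ys)
  have L: "(\<exists>j l. j<l \<and> l<length (y#ys) \<and> (y#ys)!l = x \<and> x < (y#ys)!j) \<longleftrightarrow>
     (x < y \<and> x \<in> set ys) \<or> (\<exists>j l. j<l \<and> l<length ys \<and> ys!l = x \<and> x < ys!j)"
  proof
    assume "\<exists>j l. j<l \<and> l<length (y#ys) \<and> (y#ys)!l = x \<and> x < (y#ys)!j"
    then obtain j l where h: "j<l" "l<length (y#ys)" "(y#ys)!l = x" "x < (y#ys)!j" by blast
    then obtain l' where l': "l = Suc l'" by (cases l) auto
    show "(x < y \<and> x \<in> set ys) \<or> (\<exists>j l. j<l \<and> l<length ys \<and> ys!l = x \<and> x < ys!j)"
    proof (cases j)
      case 0 then show ?thesis using h l' by (auto simp: nth_mem)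
    next
      case (Suc j') then show ?thesis using h l' by (intro disjI2 exI[of _ j'] exI[of _ l']) auto
    qed
  next
    assume "(x < y \<and> x \<in> set ys) \<or> (\<exists>j l. j<l \<and> l<length ys \<and> ys!l = x \<and> x < ys!j)"
    then show "\<exists>j l. j<l \<and> l<length (y#ys) \<and> (y#ys)!l = x \<and> x < (y#ys)!j"
    proof
      assume "x < y \<and> x \<in> set ys"
      then obtain l where "l < length ys" "ys!l = x" by (auto simp: in_set_conv_nth)
      then show ?thesis using \<open>x<y \<and> _\<close> by (intro exI[of _ 0] exI[of _ "Suc l"]) auto
    next
      assume "\<exists>j l. j<l \<and> l<length ys \<and> ys!l = x \<and> x < ys!j"
      then obtain j l where "j<l \<and> l<length ys \<and> ys!l = x \<and> x < ys!j" by blast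
      then show ?thesis by (intro exI[of _ "Suc j"] exI[of _ "Suc l"]) auto
    qed
  qed
  show ?case
  proof (cases "y \<le> x")
    case True
    then have "\<not> x < y" by simp
    then have "(\<exists>j l. j<l \<and> l<length (y#ys) \<and> (y#ys)!l = x \<and> x < (y#ys)!j) \<longleftrightarrow> x \<in> set (dropWhile (\<lambda>y. y \<le> x) ys)"
      using L Cons.IH by blast
    then show ?thesis using True by simp
  next
    case False
    have "(\<exists>j l. j<l \<and> l<length ys \<and> ys!l = x \<and> x < ys!j) \<Longrightarrow> x \<in> set ys" by (auto simp: nth_mem)
    then show ?thesis using L False by auto
  qed
qed

lemma avoids_Cons:
  "avoids_010 (x#xs) \<longleftrightarrow> avoids_010 xs \<and> \<not> (\<exists>j l. j<l \<and> l<length xs \<and> xs!l = x \<and> x < xs!j)"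
proof -
  have "(\<exists>i j l. i < j \<and> j < l \<and> l < length (x#xs) \<and> (x#xs) ! i = (x#xs) ! l \<and> (x#xs) ! i < (x#xs) ! j)
    \<longleftrightarrow> (\<exists>i j l. i < j \<and> j < l \<and> l < length xs \<and> xs ! i = xs ! l \<and> xs ! i < xs ! j)
       \<or> (\<exists>j l. j<l \<and> l<length xs \<and> xs!l = x \<and> x < xs!j)" (is "?A \<longleftrightarrow> ?B \<or> ?C")
  proof
    assume ?A
    then obtain i j l where h: "i < j" "j < l" "l < length (x#xs)" "(x#xs) ! i = (x#xs) ! l" "(x#xs) ! i < (x#xs) ! j" by blast
    obtain j' where j': "j = Suc j'" using h by (cases j) auto
    obtain l' where l': "l = Suc l'" using h by (cases l) auto
    show "?B \<or> ?C"
    proof (cases i)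
      case 0 then show ?thesis using h j' l' by (intro disjI2 exI[of _ j'] exI[of _ l']) auto
    next
      case (Suc i') then show ?thesis using h j' l' by (intro disjI1 exI[of _ i'] exI[of _ j'] exI[of _ l']) auto
    qed
  next
    assume "?B \<or> ?C"
    then show ?A
    proof
      assume ?B
      then obtain i j l where "i < j \<and> j < l \<and> l < length xs \<and> xs ! i = xs ! l \<and> xs ! i < xs ! j" by blast
      then show ?A by (intro exI[of _ "Suc i"] exI[of _ "Suc j"] exI[of _ "Suc l"]) auto
    next
      assume ?C
      then obtain j l where "j<l \<and> l<length xs \<and> xs!l = x \<and> x < xs!j" by blast
      then show ?A by (intro exI[of _ 0] exI[of _ "Suc j"] exI[of _ "Suc l"]) auto
    qed
  qed
  then show ?thesis unfolding avoids_010_def by blast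
qed

lemma avoids_av: "avoids_010 xs = av xs"
proof (induction xs)
  case Nil then show ?case by (simp add: avoids_010_def)
next
  case (Cons x xs) then show ?case by (simp add: avoids_Cons ex_later)
qed




lemma dw_remove1: "set (dropWhile P (remove1 a xs)) \<subseteq> set (dropWhile P xs)"
  proof (induction xs)
  case Nil then show ?case by simp
next
  case (Cons x xs)
  have "set (remove1 a xs) \<subseteq> set xs" by (rule set_remove1_subset)
  then show ?case using Cons by (auto dest: set_dropWhileD)
qed

lemma av_remove1: "av xs \<Longrightarrow> av (remove1 a xs)"
proof (induction xs)
  case Nil then show ?case by simp
next
  case (Cons x xs) then show ?case using dw_remove1[of "\<lambda>y. y \<le> x" a xs] by auto
qed

lemma av_append_right: "av (xs @ ys) \<Longrightarrow> av ys"
  by (induction xs) auto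

lemma dw_prefix: "set (dropWhile P xs) \<subseteq> set (dropWhile P (xs@ys))"
  by (induction xs) auto

lemma av_append_left: "av (xs @ ys) \<Longrightarrow> av xs"
proof (induction xs)
  case Nil then show ?case by simp
next
  case (Cons x xs) then show ?case using dw_prefix[of "\<lambda>y. y \<le> x" xs ys] by auto
qed

fun dup :: "nat \<Rightarrow> nat list \<Rightarrow> nat list" where
  "dup a [] = []"
| "dup a (x#xs) = (if x = a then a#a#xs else x # dup a xs)"

lemma set_dup[simp]: "set (dup a xs) = set xs"
  by (induction xs) auto

lemma length_dup: "a \<in> set xs \<Longrightarrow> length (dup a xs) = Suc (length xs)"
  by (induction xs) auto

lemma remove1_dup[simp]: "remove1 a (dup a xs) = xs"
  by (induction xs) auto

lemma dw_dup: "set (dropWhile P (dup a xs)) = set (dropWhile P xs)"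
  by (induction xs) auto

lemma av_dup: "av xs \<Longrightarrow> av (dup a xs)"
proof (induction xs)
  case Nil then show ?case by simp
next
  case (Cons x xs) then show ?case using dw_dup[of "\<lambda>y. y \<le> x" a xs] by auto
qed

lemma dup_remove1:
  "a \<in> set (remove1 a w) \<Longrightarrow> \<forall>z\<in>set w. a \<le> z \<Longrightarrow> av w \<Longrightarrow> dup a (remove1 a w) = w"
proof (induction w)
  case Nil then show ?case by simp
next
  case (Cons x xs)
  show ?case
  proof (cases "x = a")
    case True
    then have "a \<in> set xs" "a \<notin> set (dropWhile (\<lambda>y. y \<le> a) xs)" using Cons.prems by auto
    then obtain xs' where "xs = a # xs'"
      using Cons.prems(2) by (cases xs) (auto split: if_splits)
    then show ?thesis using True by simp
  next
    case False then show ?thesis using Cons by auto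
  qed
qed

lemma dw_insert: "P a \<Longrightarrow> set (dropWhile P (xs@a#ys)) \<subseteq> insert a (set (dropWhile P (xs@ys)))"
proof (induction xs)
  case Nil then show ?case by auto
next
  case (Cons x xs) then show ?case by auto
qed

lemma av_insert_min: "\<forall>z\<in>set (xs@ys). a < z \<Longrightarrow> av (xs@ys) \<Longrightarrow> av (xs@a#ys)"
proof (induction xs)
  case Nil then show ?case by (auto dest: set_dropWhileD)
next
  case (Cons x xs)
  have "x \<noteq> a" "a \<le> x" using Cons.prems by auto
  then show ?case using Cons dw_insert[of "\<lambda>y. y \<le> x" a xs ys] by auto
qed

lemma dw_keep: "\<not> P y \<Longrightarrow> set zs \<subseteq> set (dropWhile P (xs@y#zs))"
  by (induction xs) auto

lemma av_sep: "av (xs @ y # zs) \<Longrightarrow> x \<in> set xs \<Longrightarrow> x < y \<Longrightarrow> x \<in> set zs \<Longrightarrow> False"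
proof (induction xs)
  case Nil then show ?case by simp
next
  case (Cons x' xs)
  show ?case
  proof (cases "x' = x")
    case True
    then show ?thesis using Cons.prems dw_keep[of "\<lambda>z. z \<le> x" y zs xs] by auto
  next
    case False then show ?thesis using Cons by auto
  qed
qed

lemma dw_sub2: "\<not> P y \<Longrightarrow> set (dropWhile P (xs @ y # zs)) \<subseteq> set (dropWhile P xs) \<union> insert y (set zs)"
  by (induction xs) auto

lemma av_join: "av pre \<Longrightarrow> av (m#w) \<Longrightarrow> \<forall>x\<in>set pre. x<m \<Longrightarrow> set pre \<inter> set w = {} \<Longrightarrow> av (pre@m#w)"
proof (induction pre)
  case Nil then show ?case by simp
next
  case (Cons x pre)
  have "x < m" "x \<notin> set w" using Cons.prems by auto
  then show ?case using Cons dw_sub2[of "\<lambda>y. y \<le> x" m pre w] by auto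
qed




lemma app_Cons_first:
  "x \<notin> set xs \<Longrightarrow> x \<notin> set xs' \<Longrightarrow> xs @ x # ys = xs' @ x # ys' \<Longrightarrow> xs = xs' \<and> ys = ys'"
proof (induction xs arbitrary: xs')
  case Nil then show ?case by (cases xs') auto
next
  case (Cons a xs) then show ?case by (cases xs') auto
qed

definition W :: "nat \<Rightarrow> nat set \<Rightarrow> nat \<Rightarrow> nat list set" where
  "W L S t = {w. length w = L \<and> set w \<subseteq> insert t S \<and> S \<subseteq> set w \<and> av (t # w)}"

lemma finite_W: "finite S \<Longrightarrow> finite (W L S t)"
proof -
  assume "finite S"
  then have "finite {xs. set xs \<subseteq> insert t S \<and> length xs = L}" by (simp add: finite_lists_length_eq)
  then show ?thesis by (rule rev_finite_subset) (auto simp: W_def)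
qed

lemma av_rep: "av (replicate L t)"
  by (induction L) auto

lemma W_empty: "W L {} t = {replicate L t}"
proof -
  have "av (t # replicate L t)" using av_rep[of "Suc L" t] by simp
  moreover have "w = replicate L t" if "length w = L" "set w \<subseteq> {t}" for w
    using that by (metis empty_iff insert_iff replicate_length_same subset_iff)
  ultimately show ?thesis unfolding W_def by (auto simp: set_replicate_conv_if split: if_splits)
qed

lemma W_0: "W 0 S t = (if S = {} then {[]} else {})"
  by (auto simp: W_def)

lemma W_rec:
  assumes fin: "finite S" and ne: "S \<noteq> {}" and lt: "\<forall>x\<in>S. x < t"
  shows "card (W (Suc L) S t) = card (W L S t) + Suc L * card (W L (S - {Min S}) t)"
proof -
  define a where "a = Min S"
  have aS: "a \<in> S" using fin ne by (simp add: a_def)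
  have amin: "\<And>z. z \<in> S \<Longrightarrow> a \<le> z" using fin by (simp add: a_def)
  have at: "a < t" using aS lt by auto
  define A where "A = {w \<in> W (Suc L) S t. a \<in> set (remove1 a w)}"
  define B where "B = {w \<in> W (Suc L) S t. a \<notin> set (remove1 a w)}"
  have finW: "finite (W (Suc L) S t)" using fin by (rule finite_W)
  have split: "W (Suc L) S t = A \<union> B" "A \<inter> B = {}" by (auto simp: A_def B_def)
  have cardsplit: "card (W (Suc L) S t) = card A + card B"
    using split finW by (metis card_Un_disjoint finite_Un)
  have A_img: "A = dup a ` W L S t"
  proof
    show "dup a ` W L S t \<subseteq> A"
    proof
      fix v assume "v \<in> dup a ` W L S t"
      then obtain w where w: "w \<in> W L S t" and v: "v = dup a w" by blast
      have aw: "a \<in> set w" using w aS by (auto simp: W_def)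
      have "av (dup a (t # w))" using w by (intro av_dup) (simp add: W_def)
      then have "av (t # dup a w)" using at by simp
      then show "v \<in> A" using w aw v length_dup[OF aw] by (auto simp: A_def W_def)
    qed
  next
    show "A \<subseteq> dup a ` W L S t"
    proof
      fix w assume wA: "w \<in> A"
      then have wW: "length w = Suc L" "set w \<subseteq> insert t S" "S \<subseteq> set w" "av (t # w)"
        and ar: "a \<in> set (remove1 a w)" by (auto simp: A_def W_def)
      have aw: "a \<in> set w" using aS wW by auto
      have le: "\<forall>z\<in>set w. a \<le> z" using wW(2) amin at by fastforce
      have avw: "av w" using wW(4) av_append_right[of "[t]" w] by simp
      have eq: "dup a (remove1 a w) = w" using dup_remove1[OF ar le avw] .
      have "av (remove1 a (t # w))" using wW(4) by (rule av_remove1)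
      then have av2: "av (t # remove1 a w)" using at by simp
      have S2: "S \<subseteq> set (remove1 a w)"
      proof
        fix x assume "x \<in> S"
        then show "x \<in> set (remove1 a w)" using ar wW(3) by (cases "x = a") auto
      qed
      have "remove1 a w \<in> W L S t"
        using wW aw av2 S2 set_remove1_subset[of a w] by (auto simp: W_def length_remove1)
      then show "w \<in> dup a ` W L S t" using eq by (metis image_eqI)
    qed
  qed
  have injA: "inj_on (dup a) (W L S t)"
    by (rule inj_on_inverseI[where g = "remove1 a"]) simp
  define ins where "ins = (\<lambda>(w'::nat list, r::nat). take r w' @ a # drop r w')"
  have B_img: "B = ins ` (W L (S - {a}) t \<times> {0..L})"
  proof
    show "ins ` (W L (S - {a}) t \<times> {0..L}) \<subseteq> B"
    proof
      fix v assume "v \<in> ins ` (W L (S - {a}) t \<times> {0..L})"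
      then obtain w' r where w': "w' \<in> W L (S - {a}) t" and r: "r \<le> L" and v: "v = take r w' @ a # drop r w'"
        by (auto simp: ins_def)
      have wW: "length w' = L" "set w' \<subseteq> insert t (S - {a})" "S - {a} \<subseteq> set w'" "av (t # w')"
        using w' by (auto simp: W_def)
      have anw: "a \<notin> set w'" using wW(2) at by auto
      have setv: "set v = insert a (set w')"
        using v by (metis append_take_drop_id insert_commute set_append set_simps(2) Un_insert_right)
      have gt: "\<forall>z\<in>set ((t # take r w') @ drop r w'). a < z"
      proof
        fix z assume "z \<in> set ((t # take r w') @ drop r w')"
        then have "z \<in> insert t (set w')" by (metis append_Cons append_take_drop_id list.set(2))
        then have "z = t \<or> z \<in> S - {a}" using wW(2) by auto
        then show "a < z" using at amin by (metis DiffE le_neq_implies_less singletonI)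
      qed
      have "av ((t # take r w') @ drop r w')" using wW(4) by simp
      then have "av ((t # take r w') @ a # drop r w')" using gt av_insert_min by blast
      then have avv: "av (t # v)" using v by simp
      have "a \<notin> set (take r w')" using anw by (meson in_set_takeD)
      then have "remove1 a v = w'" using v anw by (simp add: remove1_append)
      then show "v \<in> B" using setv wW avv anw r aS at v
        by (auto simp: B_def W_def)
    qed
  next
    show "B \<subseteq> ins ` (W L (S - {a}) t \<times> {0..L})"
    proof
      fix w assume wB: "w \<in> B"
      then have wW: "length w = Suc L" "set w \<subseteq> insert t S" "S \<subseteq> set w" "av (t # w)"
        and ar: "a \<notin> set (remove1 a w)" by (auto simp: B_def W_def)
      have aw: "a \<in> set w" using aS wW by auto
      obtain xs ys where w: "w = xs @ a # ys" and axs: "a \<notin> set xs" using split_list_first[OF aw] by blast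
      have rem: "remove1 a w = xs @ ys" using w axs by (simp add: remove1_append)
      have ays: "a \<notin> set ys" using ar rem by simp
      have "av (remove1 a (t # w))" using wW(4) by (rule av_remove1)
      then have av2: "av (t # xs @ ys)" using at rem by simp
      have "xs @ ys \<in> W L (S - {a}) t"
        using wW av2 axs ays unfolding W_def w by auto
      moreover have "length xs \<le> L" using wW(1) w by simp
      moreover have "ins (xs @ ys, length xs) = w" using w by (simp add: ins_def)
      ultimately show "w \<in> ins ` (W L (S - {a}) t \<times> {0..L})" by force
    qed
  qed
  have injB: "inj_on ins (W L (S - {a}) t \<times> {0..L})"
  proof (rule inj_onI)
    fix p q assume p: "p \<in> W L (S - {a}) t \<times> {0..L}" and q: "q \<in> W L (S - {a}) t \<times> {0..L}"
      and eq: "ins p = ins q"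
    obtain w1 r1 where p': "p = (w1, r1)" by force
    obtain w2 r2 where q': "q = (w2, r2)" by force
    have h1: "length w1 = L" "a \<notin> set w1" "r1 \<le> L" using p p' at by (auto simp: W_def)
    have h2: "length w2 = L" "a \<notin> set w2" "r2 \<le> L" using q q' at by (auto simp: W_def)
    have "take r1 w1 @ a # drop r1 w1 = take r2 w2 @ a # drop r2 w2" using eq p' q' by (simp add: ins_def)
    moreover have n1: "a \<notin> set (take r1 w1)" and n2: "a \<notin> set (take r2 w2)"
      using h1 h2 by (meson in_set_takeD)+
    ultimately have tk: "take r1 w1 = take r2 w2 \<and> drop r1 w1 = drop r2 w2"
      using app_Cons_first[OF n1 n2] by blast
    have "w1 = take r1 w1 @ drop r1 w1" by simp
    also have "\<dots> = take r2 w2 @ drop r2 w2" using tk by simp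
    also have "\<dots> = w2" by simp
    finally have "w1 = w2" .
    moreover have "r1 = r2"
    proof -
      have "r1 = length (take r1 w1)" using h1 by simp
      also have "\<dots> = length (take r2 w2)" using tk by simp
      also have "\<dots> = r2" using h2 by simp
      finally show ?thesis .
    qed
    ultimately show "p = q" using p' q' by simp
  qed
  have "card A = card (W L S t)" using A_img injA by (simp add: card_image)
  moreover have "card B = card (W L (S - {a}) t) * Suc L"
    using B_img injB by (simp add: card_image card_cartesian_product)
  ultimately show ?thesis using cardsplit a_def by simp
qed

lemma card_W: "finite S \<Longrightarrow> \<forall>x\<in>S. x < t \<Longrightarrow> card (W L S t) = stirling (Suc L) (Suc L - card S)"
proof (induction L arbitrary: S)
  case 0
  then show ?case by (cases "S = {}") (auto simp: W_0 Suc_le_eq card_gt_0_iff)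
next
  case (Suc L)
  show ?case
  proof (cases "S = {}")
    case True then show ?thesis by (simp add: W_empty)
  next
    case False
    define k where "k = card S"
    have k1: "k \<ge> 1" using False Suc.prems k_def by (simp add: Suc_le_eq card_gt_0_iff)
    have ck: "card (S - {Min S}) = k - 1" using Suc.prems False k_def by simp
    have r: "card (W (Suc L) S t) = stirling (Suc L) (Suc L - k) + Suc L * stirling (Suc L) (Suc L - (k - 1))"
      using W_rec[OF Suc.prems(1) False Suc.prems(2), of L] Suc.IH[of S] Suc.IH[of "S - {Min S}"] Suc.prems ck k_def
      by simp
    show ?thesis
    proof (cases "k \<le> Suc L")
      case True
      have e1: "Suc (Suc L) - k = Suc (Suc L - k)" "Suc L - (k - 1) = Suc (Suc L - k)" using True k1 by auto
      show ?thesis unfolding k_def[symmetric] r e1 by simp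
    next
      case False
      then have e: "Suc (Suc L) - k = 0" "Suc L - k = 0" "Suc L - (k - 1) = 0" by auto
      show ?thesis unfolding k_def[symmetric] r e by simp
    qed
  qed
qed




definition Sub :: "nat \<Rightarrow> nat \<Rightarrow> nat list \<Rightarrow> nat \<Rightarrow> nat set set" where
  "Sub m d pre i = {S. S \<subseteq> {0..<m} - set pre \<and> card S = d - Suc i}"

definition TT :: "nat \<Rightarrow> nat \<Rightarrow> nat \<Rightarrow> (nat \<times> nat \<times> nat \<times> nat list \<times> nat set \<times> nat list) set" where
  "TT n m d = (SIGMA i:{0..<d}. SIGMA q:{m..<n}. SIGMA j:{0..<m}. SIGMA pre:Bset q j i.
      SIGMA S:Sub m d pre i. W (n - Suc q) S m)"

definition ff :: "nat \<Rightarrow> nat \<times> nat \<times> nat \<times> nat list \<times> nat set \<times> nat list \<Rightarrow> nat list" where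
  "ff m = (\<lambda>(i,q,j,pre,S,w). pre @ m # w)"

lemma finite_Bset: "finite (Bset q j i)"
proof -
  have "finite {xs. set xs \<subseteq> {0..<q} \<and> length xs = q}" by (simp add: finite_lists_length_eq)
  moreover have "Bset q j i \<subseteq> {xs. set xs \<subseteq> {0..<q} \<and> length xs = q}"
  proof
    fix s assume "s \<in> Bset q j i"
    then have "length s = q" "\<forall>k<q. s ! k < Suc k" by (auto simp: Bset_def inv_seq_def)
    then show "s \<in> {xs. set xs \<subseteq> {0..<q} \<and> length xs = q}"
      by (auto simp: in_set_conv_nth) (metis less_trans_Suc not_less_eq)
  qed
  ultimately show ?thesis by (rule rev_finite_subset)
qed

lemma pre_lt:
  assumes "pre \<in> Bset q j i" "j < m"
  shows "\<forall>x\<in>set pre. x < m"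
proof
  fix x assume "x \<in> set pre"
  then have "x \<le> Max (set pre)" by simp
  then show "x < m" using assms by (simp add: Bset_def)
qed

lemma inj_ff: "inj_on (ff m) (TT n m d)"
proof (rule inj_onI)
  fix a b assume a: "a \<in> TT n m d" and b: "b \<in> TT n m d" and e: "ff m a = ff m b"
  obtain i q j pre S w where a': "a = (i,q,j,pre,S,w)" by (cases a) auto
  obtain i' q' j' pre' S' w' where b': "b = (i',q',j',pre',S',w')" by (cases b) auto
  have ha: "j < m" "pre \<in> Bset q j i" "S \<subseteq> {0..<m} - set pre" "w \<in> W (n - Suc q) S m"
    using a a' by (auto simp: TT_def Sub_def)
  have hb: "j' < m" "pre' \<in> Bset q' j' i'" "S' \<subseteq> {0..<m} - set pre'" "w' \<in> W (n - Suc q') S' m"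
    using b b' by (auto simp: TT_def Sub_def)
  have n1: "m \<notin> set pre" and n2: "m \<notin> set pre'" using pre_lt[OF ha(2) ha(1)] pre_lt[OF hb(2) hb(1)] by auto
  have "pre @ m # w = pre' @ m # w'" using e a' b' by (simp add: ff_def)
  then have "pre = pre' \<and> w = w'" by (rule app_Cons_first[OF n1 n2])
  then have pp: "pre = pre'" and ww: "w = w'" by auto
  have "q = length pre" "q' = length pre'" using ha hb by (auto simp: Bset_def inv_seq_def)
  then have qq: "q = q'" using pp by simp
  have ii: "i = i'" "j = j'" using ha hb pp by (auto simp: Bset_def)
  have "S = set w - {m}" using ha by (auto simp: W_def)
  moreover have "S' = set w' - {m}" using hb by (auto simp: W_def)
  ultimately have "S = S'" using ww by simp
  then show "a = b" using a' b' pp ww qq ii by simp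
qed

lemma img_sub:
  assumes n: "n \<ge> 1" and m: "m \<ge> 1"
  shows "ff m ` TT n m d \<subseteq> Bset n m d"
proof
  fix s assume "s \<in> ff m ` TT n m d"
  then obtain i q j pre S w where t: "(i,q,j,pre,S,w) \<in> TT n m d" and s: "s = pre @ m # w"
    by (auto simp: ff_def)
  have h: "i < d" "m \<le> q" "q < n" "j < m" "pre \<in> Bset q j i" "S \<subseteq> {0..<m} - set pre"
     "card S = d - Suc i" "w \<in> W (n - Suc q) S m"
    using t by (auto simp: TT_def Sub_def)
  have pre: "length pre = q" "\<forall>k<q. pre ! k < Suc k" "av pre" "card (set pre) = i"
    using h(5) by (auto simp: Bset_def inv_seq_def avoids_av)
  have wW: "length w = n - Suc q" "set w \<subseteq> insert m S" "S \<subseteq> set w" "av (m # w)"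
    using h(8) by (auto simp: W_def)
  have plt: "\<forall>x\<in>set pre. x < m" using pre_lt[OF h(5) h(4)] .
  have Sm: "\<forall>x\<in>S. x < m" using h(6) by auto
  have len: "length s = n" using s pre wW h by simp
  have inv: "\<forall>k<n. s ! k < Suc k"
  proof (intro allI impI)
    fix k assume k: "k < n"
    show "s ! k < Suc k"
    proof (cases "k < q")
      case True then show ?thesis using s pre by (simp add: nth_append)
    next
      case False
      show ?thesis
      proof (cases "k = q")
        case True then show ?thesis using s pre h by (simp add: nth_append)
      next
        case False
        with \<open>\<not> k < q\<close> have kq: "k > q" by simp
        then have "s ! k = w ! (k - Suc q)" using s pre by (simp add: nth_append nth_Cons')
        moreover have "k - Suc q < length w" using kq k wW by simp
        ultimately have "s ! k \<in> insert m S" using wW(2) by (metis nth_mem subsetD)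
        then have "s ! k \<le> m" using Sm by auto
        then show ?thesis using kq h by simp
      qed
    qed
  qed
  have disj: "set pre \<inter> set w = {}" using wW(2) h(6) plt by auto
  have avs: "av s" using av_join[OF pre(3) wW(4) plt disj] s by simp
  have sets: "set s = set pre \<union> insert m S" using s wW(2,3) by auto
  have finS: "finite S" using h(6) by (rule finite_subset) simp
  have maxs: "Max (set s) = m"
    by (rule Max_eqI) (use sets plt Sm finS in auto)
  have "card (set s) = card (set pre) + card (insert m S)"
    unfolding sets by (rule card_Un_disjoint) (use finS plt Sm h(6) in auto)
  moreover have "card (insert m S) = Suc (card S)"
    using Sm card_insert_disjoint[OF finS] by auto
  ultimately have "card (set s) = d" using pre(4) h(1) h(7) by simp
  then show "s \<in> Bset n m d" using len inv avs maxs by (simp add: Bset_def inv_seq_def avoids_av)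
qed

lemma sub_img:
  assumes n: "n \<ge> 1" and m: "m \<ge> 1"
  shows "Bset n m d \<subseteq> ff m ` TT n m d"
proof
  fix s assume sB: "s \<in> Bset n m d"
  then have len: "length s = n" and inv: "\<forall>k<n. s ! k < Suc k" and avs: "av s"
    and maxs: "Max (set s) = m" and cs: "card (set s) = d"
    by (auto simp: Bset_def inv_seq_def avoids_av)
  have "s \<noteq> []" using len n by auto
  then have ms: "m \<in> set s" using maxs Max_in[of "set s"] by simp
  have le: "\<forall>x\<in>set s. x \<le> m" using maxs by auto
  obtain pre w where s: "s = pre @ m # w" and mpre: "m \<notin> set pre" using split_list_first[OF ms] by blast
  define q where "q = length pre"
  have sq: "s ! q = m" using s q_def by simp
  have qn: "q < n" using len s q_def by simp
  have "s ! q < Suc q" using inv qn by simp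
  then have mq: "m \<le> q" using sq by simp
  have plt: "\<forall>x\<in>set pre. x < m"
  proof
    fix x assume "x \<in> set pre"
    then have "x \<le> m" "x \<noteq> m" using le s mpre by auto
    then show "x < m" by simp
  qed
  have pne: "pre \<noteq> []" using mq m q_def by auto
  define j where "j = Max (set pre)"
  define i where "i = card (set pre)"
  have jm: "j < m" using pne plt j_def by simp
  have avpre: "av pre" using avs s av_append_left by blast
  have invpre: "\<forall>k<q. pre ! k < Suc k"
  proof (intro allI impI)
    fix k assume "k < q"
    then have "pre ! k = s ! k" using s q_def by (simp add: nth_append)
    then show "pre ! k < Suc k" using inv \<open>k < q\<close> qn by simp
  qed
  have preB: "pre \<in> Bset q j i" using invpre avpre q_def j_def i_def by (simp add: Bset_def inv_seq_def avoids_av)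
  define S where "S = set w - {m}"
  have Ssub: "S \<subseteq> {0..<m} - set pre"
  proof
    fix x assume xS: "x \<in> S"
    then have "x \<in> set w" "x \<noteq> m" using S_def by auto
    then have "x \<le> m" using le s by auto
    then have xm: "x < m" using \<open>x \<noteq> m\<close> by simp
    have "x \<notin> set pre" using av_sep[of pre m w x] avs s xm \<open>x \<in> set w\<close> by blast
    then show "x \<in> {0..<m} - set pre" using xm by simp
  qed
  have sets: "set s = set pre \<union> insert m S" using s S_def by auto
  have Sm: "m \<notin> S" using S_def by simp
  have finS: "finite S" using S_def by simp
  have "card (set s) = card (set pre) + card (insert m S)"
    unfolding sets by (rule card_Un_disjoint) (use finS Ssub mpre in auto)
  then have cd: "d = i + Suc (card S)" using cs i_def finS Sm by simp
  then have id: "i < d" by simp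
  have cS: "card S = d - Suc i" using cd by simp
  have wW: "w \<in> W (n - Suc q) S m"
    using len s q_def S_def avs av_append_right[of pre "m # w"] by (auto simp: W_def)
  have "(i,q,j,pre,S,w) \<in> TT n m d"
    using id mq qn jm preB Ssub cS wW by (simp add: TT_def Sub_def)
  moreover have "s = ff m (i,q,j,pre,S,w)" using s by (simp add: ff_def)
  ultimately show "s \<in> ff m ` TT n m d" by blast
qed




lemma inner_card:
  assumes pre: "pre \<in> Bset q j i" and jm: "j < m" and id: "i < d" and qn: "q < n"
  shows "card (SIGMA S:Sub m d pre i. W (n - Suc q) S m) =
    binom_int (int m - int i) (int d - int i - 1) * stirling1_int (n - q) (int n - int (Suc q) - int d + int i + 2)"
proof -
  have plt: "\<forall>x\<in>set pre. x < m" using pre_lt[OF pre jm] .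
  have ci: "card (set pre) = i" using pre by (simp add: Bset_def)
  have psub: "set pre \<subseteq> {0..<m}" using plt by auto
  have im: "i \<le> m" using card_mono[OF _ psub] ci by simp
  have finSub: "finite (Sub m d pre i)" unfolding Sub_def
    by (rule finite_subset[of _ "Pow {0..<m}"]) auto
  have cW: "card (W (n - Suc q) S m) = stirling (n - q) (n - q - (d - Suc i))" if "S \<in> Sub m d pre i" for S
  proof -
    have "S \<subseteq> {0..<m}" "card S = d - Suc i" using that by (auto simp: Sub_def)
    then have "finite S" "\<forall>x\<in>S. x < m" by (auto intro: finite_subset)
    then have "card (W (n - Suc q) S m) = stirling (Suc (n - Suc q)) (Suc (n - Suc q) - card S)"
      by (rule card_W)
    also have "Suc (n - Suc q) = n - q" using qn by simp
    finally show ?thesis using \<open>card S = d - Suc i\<close> by simp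
  qed
  have "card (SIGMA S:Sub m d pre i. W (n - Suc q) S m) = (\<Sum>S\<in>Sub m d pre i. card (W (n - Suc q) S m))"
    using finSub by (intro card_SigmaI) (auto simp: Sub_def intro!: finite_W intro: finite_subset)
  also have "\<dots> = (\<Sum>S\<in>Sub m d pre i. stirling (n - q) (n - q - (d - Suc i)))"
    using cW by (rule sum.cong[OF refl])
  also have "\<dots> = card (Sub m d pre i) * stirling (n - q) (n - q - (d - Suc i))" by simp
  also have "card (Sub m d pre i) = (m - i) choose (d - Suc i)"
  proof -
    have "card (Sub m d pre i) = card ({0..<m} - set pre) choose (d - Suc i)"
      unfolding Sub_def by (rule n_subsets) simp
    moreover have "card ({0..<m} - set pre) = m - i" using card_Diff_subset[OF _ psub] ci by simp
    ultimately show ?thesis by simp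
  qed
  also have "(m - i) choose (d - Suc i) = binom_int (int m - int i) (int d - int i - 1)"
  proof -
    have e1: "int m - int i = int (m - i)" using im by simp
    have e2: "int d - int i - 1 = int (d - Suc i)" using id by simp
    show ?thesis unfolding e1 e2 binom_int_def by (auto simp: binomial_eq_0)
  qed
  also have "stirling (n - q) (n - q - (d - Suc i)) = stirling1_int (n - q) (int n - int (Suc q) - int d + int i + 2)"
  proof -
    show ?thesis
    proof (cases "d - Suc i < n - q")
      case True
      have pos: "\<not> (int n - int (Suc q) - int d + int i + 2 \<le> 0)" using True id qn by arith
      have nb: "nat (int n - int (Suc q) - int d + int i + 2) = n - q - (d - Suc i)" using True id qn by arith
      show ?thesis by (simp only: stirling1_int_def if_not_P[OF pos] nb)
    next
      case False
      have b: "int n - int (Suc q) - int d + int i + 2 \<le> 0" using False id qn by arith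
      have "n - q - (d - Suc i) = 0" using False by simp
      moreover have "n - q > 0" using qn by simp
      ultimately show ?thesis unfolding stirling1_int_def using b by simp
    qed
  qed
  finally show ?thesis .
qed

lemma card_TT:
  shows "card (TT n m d) = (\<Sum>i\<in>{0..<d}. \<Sum>q\<in>{m..<n}. \<Sum>j\<in>{0..<m}. bnum q j i *
     (binom_int (int m - int i) (int d - int i - 1) * stirling1_int (n - q) (int n - int (Suc q) - int d + int i + 2)))"
proof -
  have finSub: "finite (Sub m d pre i)" for pre i unfolding Sub_def
    by (rule finite_subset[of _ "Pow {0..<m}"]) auto
  have finL5: "finite (SIGMA S:Sub m d pre i. W (n - Suc q) S m)" for pre i q
    using finSub by (intro finite_SigmaI) (auto simp: Sub_def intro!: finite_W intro: finite_subset)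
  have finL4: "finite (SIGMA pre:Bset q j i. SIGMA S:Sub m d pre i. W (n - Suc q) S m)" for q j i
    by (rule finite_SigmaI, rule finite_Bset, rule finL5)
  have finL3: "finite (SIGMA j:{0..<m}. SIGMA pre:Bset q j i. SIGMA S:Sub m d pre i. W (n - Suc q) S m)" for q i
    by (rule finite_SigmaI, simp, rule finL4)
  have finL2: "finite (SIGMA q:{m..<n}. SIGMA j:{0..<m}. SIGMA pre:Bset q j i. SIGMA S:Sub m d pre i. W (n - Suc q) S m)" for i
    by (rule finite_SigmaI, simp, rule finL3)
  have "card (TT n m d) = (\<Sum>i\<in>{0..<d}. \<Sum>q\<in>{m..<n}. \<Sum>j\<in>{0..<m}. \<Sum>pre\<in>Bset q j i.
      card (SIGMA S:Sub m d pre i. W (n - Suc q) S m))"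
    unfolding TT_def
    by (simp add: card_SigmaI finL2 finL3 finL4 finL5 finite_Bset)
  also have "\<dots> = (\<Sum>i\<in>{0..<d}. \<Sum>q\<in>{m..<n}. \<Sum>j\<in>{0..<m}. \<Sum>pre\<in>Bset q j i.
      binom_int (int m - int i) (int d - int i - 1) * stirling1_int (n - q) (int n - int (Suc q) - int d + int i + 2))"
    by (intro sum.cong refl inner_card) auto
  also have "\<dots> = (\<Sum>i\<in>{0..<d}. \<Sum>q\<in>{m..<n}. \<Sum>j\<in>{0..<m}. bnum q j i *
     (binom_int (int m - int i) (int d - int i - 1) * stirling1_int (n - q) (int n - int (Suc q) - int d + int i + 2)))"
    by (simp add: bnum_def)
  finally show ?thesis .
qed




theorem mainTheorem2:
  fixes n m d :: nat
  assumes "n \<ge> 1" and "m \<ge> 1"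
  shows "bnum n m d =
    (\<Sum>i\<in>{0..<d}. binom_int (int m - int i) (int d - int i - 1) *
       (\<Sum>p\<in>{m+1..n}. stirling1_int (n - p + 1) (int n - int p - int d + int i + 2) *
          (\<Sum>j\<in>{0..<m}. bnum (p - 1) j i)))"
proof -
  have "Bset n m d = ff m ` TT n m d" using img_sub[OF assms] sub_img[OF assms] by blast
  then have "bnum n m d = card (TT n m d)" unfolding bnum_def using inj_ff by (simp add: card_image)
  also have "\<dots> = (\<Sum>i\<in>{0..<d}. \<Sum>q\<in>{m..<n}. \<Sum>j\<in>{0..<m}. bnum q j i *
     (binom_int (int m - int i) (int d - int i - 1) * stirling1_int (n - q) (int n - int (Suc q) - int d + int i + 2)))"
    by (rule card_TT)
  also have "\<dots> = (\<Sum>i\<in>{0..<d}. binom_int (int m - int i) (int d - int i - 1) *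
       (\<Sum>q\<in>{m..<n}. stirling1_int (n - Suc q + 1) (int n - int (Suc q) - int d + int i + 2) *
          (\<Sum>j\<in>{0..<m}. bnum (Suc q - 1) j i)))"
  proof (rule sum.cong[OF refl])
    fix i assume "i \<in> {0..<d}"
    have "(\<Sum>q\<in>{m..<n}. \<Sum>j\<in>{0..<m}. bnum q j i *
     (binom_int (int m - int i) (int d - int i - 1) * stirling1_int (n - q) (int n - int (Suc q) - int d + int i + 2)))
      = (\<Sum>q\<in>{m..<n}. binom_int (int m - int i) (int d - int i - 1) *
       (stirling1_int (n - Suc q + 1) (int n - int (Suc q) - int d + int i + 2) *
          (\<Sum>j\<in>{0..<m}. bnum (Suc q - 1) j i)))"
    proof (rule sum.cong[OF refl])
      fix q assume "q \<in> {m..<n}"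
      then have e: "n - Suc q + 1 = n - q" by auto
      show "(\<Sum>j\<in>{0..<m}. bnum q j i *
     (binom_int (int m - int i) (int d - int i - 1) * stirling1_int (n - q) (int n - int (Suc q) - int d + int i + 2)))
      = binom_int (int m - int i) (int d - int i - 1) *
       (stirling1_int (n - Suc q + 1) (int n - int (Suc q) - int d + int i + 2) *
          (\<Sum>j\<in>{0..<m}. bnum (Suc q - 1) j i))"
        unfolding e by (simp add: sum_distrib_left sum_distrib_right mult_ac)
    qed
    then show "(\<Sum>q\<in>{m..<n}. \<Sum>j\<in>{0..<m}. bnum q j i *
     (binom_int (int m - int i) (int d - int i - 1) * stirling1_int (n - q) (int n - int (Suc q) - int d + int i + 2)))
      = binom_int (int m - int i) (int d - int i - 1) *
       (\<Sum>q\<in>{m..<n}. stirling1_int (n - Suc q + 1) (int n - int (Suc q) - int d + int i + 2) *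
          (\<Sum>j\<in>{0..<m}. bnum (Suc q - 1) j i))"
      by (simp add: sum_distrib_left)
  qed
  also have "\<dots> = (\<Sum>i\<in>{0..<d}. binom_int (int m - int i) (int d - int i - 1) *
       (\<Sum>p\<in>{m+1..n}. stirling1_int (n - p + 1) (int n - int p - int d + int i + 2) *
          (\<Sum>j\<in>{0..<m}. bnum (p - 1) j i)))"
  proof -
    have r: "(\<Sum>p\<in>{m+1..n}. g p) = (\<Sum>q\<in>{m..<n}. g (Suc q))" for g :: "nat \<Rightarrow> nat"
    proof -
      have eq: "{m+1..n} = Suc ` {m..<n}" by (simp add: image_Suc_atLeastLessThan atLeastLessThanSuc_atLeastAtMost)
      have "sum g (Suc ` {m..<n}) = sum (g \<circ> Suc) {m..<n}" by (rule sum.reindex) simp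
      then show ?thesis unfolding eq comp_def .
    qed
    show ?thesis by (simp only: r)
  qed
  finally show ?thesis .
qed


end
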